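(* Let $n\ge 2$ be an integer and let $Q_{4n}=\langle x,y : x^{2n}=1,\ x^n=y^2,\ yx=x^{-1}y\rangle$ be the generalized quaternion group of order $4n$. Let $\Gamma_{Q_{4n}}$ be its non-commuting graph. Then the spectrum of the distance Laplacian matrix $D^L(\Gamma_{Q_{4n}})$ (eigenvalues counted with multiplicity, multiplicities being added if two of the listed values coincide) consists of: (a) $0$ with multiplicity $1$; (b) $4n-2$ and $4n$, each with multiplicity $n$; (c) $6n-4$ with multiplicity $2n-3$.
   Context: For a finite non-abelian group $G$ with centre $Z(G)$, the non-commuting graph $\Gamma_G$ is the simple undirected graph with vertex set $G\setminus Z(G)$, in which two distinct vertices $u,v$ are adjacent if and only if $uv\ne vu$. For a connected graph $H$, $d_{uv}$ denotes the length of a shortest path between $u$ and $v$; the distance matrix $D(H)$ has $(u,v)$-entry $d_{uv}$. The transmission of a vertex $v$ is $\sum_{u} d_{uv}$, and $Tr(H)$ is the diagonal matrix of vertex transmissions. The distance Laplacian matrix is $D^L(H)=Tr(H)-D(H)$. *)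

theory Defs
  imports "HOL-Algebra.Generated_Groups" "Jordan_Normal_Form.Char_Poly"
begin

definition grp_center :: "('a, 'b) monoid_scheme \<Rightarrow> 'a set" where
  "grp_center G = {z \<in> carrier G. \<forall>g \<in> carrier G. z \<otimes>\<^bsub>G\<^esub> g = g \<otimes>\<^bsub>G\<^esub> z}"

definition nc_vertices :: "('a, 'b) monoid_scheme \<Rightarrow> 'a set" where
  "nc_vertices G = carrier G - grp_center G"

definition nc_adj :: "('a, 'b) monoid_scheme \<Rightarrow> 'a \<Rightarrow> 'a \<Rightarrow> bool" where
  "nc_adj G u v \<longleftrightarrow> u \<in> nc_vertices G \<and> v \<in> nc_vertices G \<and> u \<noteq> v
      \<and> u \<otimes>\<^bsub>G\<^esub> v \<noteq> v \<otimes>\<^bsub>G\<^esub> u"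

definition nc_walk :: "('a, 'b) monoid_scheme \<Rightarrow> nat \<Rightarrow> 'a \<Rightarrow> 'a \<Rightarrow> bool" where
  "nc_walk G k u v \<longleftrightarrow> (\<exists>p :: nat \<Rightarrow> 'a. p 0 = u \<and> p k = v \<and> u \<in> nc_vertices G
      \<and> (\<forall>i < k. nc_adj G (p i) (p (Suc i))))"

(* distance d_{uv}: length of a shortest path (= shortest walk) *)
definition nc_dist :: "('a, 'b) monoid_scheme \<Rightarrow> 'a \<Rightarrow> 'a \<Rightarrow> nat" where
  "nc_dist G u v = (LEAST k. nc_walk G k u v)"

definition nc_transmission :: "('a, 'b) monoid_scheme \<Rightarrow> 'a \<Rightarrow> nat" where
  "nc_transmission G v = (\<Sum>u \<in> nc_vertices G. nc_dist G u v)"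

definition nc_dist_laplacian :: "('a, 'b) monoid_scheme \<Rightarrow> (nat \<Rightarrow> 'a) \<Rightarrow> real mat" where
  "nc_dist_laplacian G f = mat (card (nc_vertices G)) (card (nc_vertices G))
     (\<lambda>(i, j). (if i = j then real (nc_transmission G (f i)) else 0) - real (nc_dist G (f i) (f j)))"

end

theory Submission
  imports Defs
begin


lemma vec_sp[simp]: "vec N f \<bullet> vec N g = (\<Sum>k=0..<N. f k * g k)"
  by (simp add: scalar_prod_def)

lemma mat_mult_entry:
  assumes "i < N" "j < N"
  shows "(mat N N a * mat N N b) $$ (i,j) = (\<Sum>k=0..<N. a (i,k) * b (k,j))"
  using assms by (simp add: scalar_prod_def)

locale eqv =
  fixes N :: nat and R :: "nat \<Rightarrow> nat \<Rightarrow> bool"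
  assumes Npos: "0 < N"
    and Rrefl: "\<And>i. R i i"
    and Rsym: "\<And>i j. R i j \<Longrightarrow> R j i"
    and Rtrans: "\<And>i j k. i < N \<Longrightarrow> j < N \<Longrightarrow> k < N \<Longrightarrow> R i j \<Longrightarrow> R j k \<Longrightarrow> R i k"
begin

definition cls where "cls i = {k. k < N \<and> R i k}"
definition sz where "sz i = card (cls i)"
definition rep where "rep i = (LEAST k. R i k)"

lemma Rcomm: "R i j = R j i" using Rsym by blast

lemma cls_fin: "finite (cls i)" unfolding cls_def by auto

lemma sz_pos: "i < N \<Longrightarrow> sz i > 0"
  unfolding sz_def using cls_fin[of i] Rrefl[of i]
  by (metis (mono_tags, lifting) card_gt_0_iff cls_def empty_iff mem_Collect_eq)

lemma cls_eq: "i < N \<Longrightarrow> j < N \<Longrightarrow> R i j \<Longrightarrow> cls i = cls j"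
  unfolding cls_def using Rtrans Rsym by blast

lemma sz_eq: "i < N \<Longrightarrow> j < N \<Longrightarrow> R i j \<Longrightarrow> sz i = sz j"
  unfolding sz_def using cls_eq by simp

lemma rep_le: "rep i \<le> i" unfolding rep_def using Rrefl by (simp add: Least_le)

lemma rep_R: "R i (rep i)" unfolding rep_def using Rrefl by (metis LeastI)

lemma rep_lt: "i < N \<Longrightarrow> rep i < N" using rep_le[of i] by simp

lemma rep_eq: assumes "i < N" "j < N" "R i j" shows "rep i = rep j"
proof -
  have a: "rep i < N" "R i (rep i)" using rep_lt rep_R assms by auto
  have "R j (rep i)" using Rtrans[of j i "rep i"] assms a Rsym by blast
  hence "rep j \<le> rep i" unfolding rep_def by (simp add: Least_le)
  moreover have "R j (rep j)" "rep j < N" using rep_lt rep_R assms by auto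
  hence "R i (rep j)" using Rtrans[of i j "rep j"] assms by blast
  hence "rep i \<le> rep j" unfolding rep_def by (simp add: Least_le)
  ultimately show ?thesis by simp
qed

lemma rep_rep: "i < N \<Longrightarrow> rep (rep i) = rep i"
  using rep_eq[of i "rep i"] rep_lt rep_R by simp

lemma rep0: "rep 0 = 0" using rep_le[of 0] by simp

lemma R_rep_iff: "i < N \<Longrightarrow> j < N \<Longrightarrow> rep i = i \<Longrightarrow> rep j = j \<Longrightarrow> R i j \<longleftrightarrow> i = j"
  using rep_eq Rrefl by metis

lemma sum_R: "a < N \<Longrightarrow> (\<Sum>k=0..<N. (of_bool (R a k) :: real)) = real (sz a)"
proof -
  assume "a < N"
  have "(\<Sum>k=0..<N. (of_bool (R a k) :: real)) = (\<Sum>k\<in>{k\<in>{0..<N}. R a k}. 1)"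
    by (simp add: sum.inter_filter[symmetric] of_bool_def if_distrib)
  also have "{k\<in>{0..<N}. R a k} = cls a" unfolding cls_def by auto
  finally show ?thesis unfolding sz_def by simp
qed

lemma sum_RR: "a < N \<Longrightarrow> b < N \<Longrightarrow>
   (\<Sum>k=0..<N. (of_bool (R a k) :: real) * of_bool (R b k)) = (if R a b then real (sz a) else 0)"
proof -
  assume ab: "a < N" "b < N"
  have "(\<Sum>k=0..<N. (of_bool (R a k) :: real) * of_bool (R b k)) = (\<Sum>k=0..<N. of_bool (R a k \<and> R b k))"
    by (rule sum.cong) auto
  also have "\<dots> = (\<Sum>k=0..<N. (of_bool (R a k \<and> R a b)))"
    apply (rule sum.cong, simp) using ab Rtrans Rsym by (smt (verit) atLeastLessThan_iff)
  also have "\<dots> = (if R a b then real (sz a) else 0)"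
    using sum_R[OF ab(1)] by simp
  finally show ?thesis .
qed

lemma sum_delta: "a < N \<Longrightarrow> (\<Sum>k=0..<N. (of_bool (k = a) :: real) * g k) = g a"
proof -
  assume "a < N"
  have "(\<Sum>k=0..<N. (of_bool (k = a) :: real) * g k) = (\<Sum>k=0..<N. if k = a then g k else 0)"
    by (rule sum.cong) auto
  thus ?thesis using \<open>a < N\<close> by (simp add: sum.delta)
qed

lemma sum_delta': "a < N \<Longrightarrow> (\<Sum>k=0..<N. g k * (of_bool (k = a) :: real)) = g a"
  using sum_delta[of a g] by (simp add: mult.commute)

definition ip :: "(nat \<Rightarrow> real) \<Rightarrow> (nat \<Rightarrow> real) \<Rightarrow> real" where
  "ip u v = (\<Sum>k=0..<N. u k * v k)"

lemma ip_diff_l: "ip (\<lambda>k. u k - v k) w = ip u w - ip v w"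
  unfolding ip_def by (simp add: algebra_simps sum_subtractf)
lemma ip_diff_r: "ip w (\<lambda>k. u k - v k) = ip w u - ip w v"
  unfolding ip_def by (simp add: algebra_simps sum_subtractf)
lemma ip_add_l: "ip (\<lambda>k. u k + v k) w = ip u w + ip v w"
  unfolding ip_def by (simp add: algebra_simps sum.distrib)
lemma ip_add_r: "ip w (\<lambda>k. u k + v k) = ip w u + ip w v"
  unfolding ip_def by (simp add: algebra_simps sum.distrib)
lemma ip_scale_l: "ip (\<lambda>k. c * u k) w = c * ip u w"
  unfolding ip_def by (simp add: algebra_simps sum_distrib_left)
lemma ip_scale_r: "ip w (\<lambda>k. c * u k) = c * ip w u"
  unfolding ip_def by (simp add: algebra_simps sum_distrib_left)
lemma ip_delta_l: "a < N \<Longrightarrow> ip (\<lambda>k. of_bool (k = a)) w = w a"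
  unfolding ip_def by (rule sum_delta)
lemma ip_delta_r: "a < N \<Longrightarrow> ip w (\<lambda>k. of_bool (k = a)) = w a"
  unfolding ip_def by (rule sum_delta')
lemma ip_RR: "a < N \<Longrightarrow> b < N \<Longrightarrow> ip (\<lambda>k. of_bool (R a k)) (\<lambda>k. of_bool (R b k)) = (if R a b then real (sz a) else 0)"
  unfolding ip_def by (rule sum_RR)
definition one :: "nat \<Rightarrow> real" where "one k = 1"
lemma ip_R1: "a < N \<Longrightarrow> ip (\<lambda>k. of_bool (R a k)) one = real (sz a)"
  unfolding ip_def one_def using sum_R by simp
lemma ip_1R: "a < N \<Longrightarrow> ip one (\<lambda>k. of_bool (R a k)) = real (sz a)"
  unfolding ip_def one_def using sum_R by simp
lemma ip_11: "ip one one = real N"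
  unfolding ip_def one_def by simp
lemma ip_delta_l': "a < N \<Longrightarrow> ip (\<lambda>k. of_bool (k = a)) one = 1"
  using ip_delta_l[of a one] by (simp add: one_def)
lemma ip_delta_r': "a < N \<Longrightarrow> ip one (\<lambda>k. of_bool (k = a)) = 1"
  using ip_delta_r[of a one] by (simp add: one_def)
lemma ip_div_l: "ip (\<lambda>k. u k / c) w = ip u w / c"
  unfolding ip_def by (simp add: sum_divide_distrib)
lemma ip_div_r: "ip w (\<lambda>k. u k / c) = ip w u / c"
  unfolding ip_def by (simp add: sum_divide_distrib)
lemma ip_div_l': "ip (\<lambda>k. one k / c) w = ip one w / c"
  using ip_div_l[of one c w] by simp
lemma ip_div_r': "ip w (\<lambda>k. one k / c) = ip w one / c"
  using ip_div_r[of w one c] by simp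
lemma ip_scale_l': "ip (\<lambda>k. c * one k) w = c * ip one w"
  using ip_scale_l[of c one w] by simp
lemma ip_scale_r': "ip w (\<lambda>k. c * one k) = c * ip w one"
  using ip_scale_r[of w c one] by simp

lemmas ip_simps = ip_diff_l ip_diff_r ip_add_l ip_add_r ip_scale_l ip_scale_r ip_scale_l' ip_scale_r'
  ip_delta_l' ip_delta_r' ip_delta_l ip_delta_r
  ip_RR ip_R1 ip_1R ip_11 ip_div_l ip_div_r ip_div_l' ip_div_r'

definition Pe :: "nat \<Rightarrow> nat \<Rightarrow> real" where
  "Pe k i = (if i = 0 then one k else if rep i = i then real (sz 0) * of_bool (R i k) - real (sz i) * of_bool (R 0 k)
     else of_bool (k = i) - of_bool (k = rep i))"
definition Qe :: "nat \<Rightarrow> nat \<Rightarrow> real" where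
  "Qe j k = (if j = 0 then (1 / real N) * one k else if rep j = j then (1 / real (sz 0)) * ((1 / real (sz j)) * of_bool (R j k) - (1 / real N) * one k)
     else of_bool (k = j) - (1 / real (sz j)) * of_bool (R j k))"
definition lam :: "nat \<Rightarrow> real" where
  "lam j = (if j = 0 then 0 else if rep j = j then real N else real N + real (sz j))"
definition Me :: "nat \<Rightarrow> nat \<Rightarrow> real" where
  "Me k = (\<lambda>i. (real N + real (sz k)) * of_bool (i = k) - one i - of_bool (R k i))"

lemma Pe_0: "Pe k 0 = one k" by (simp add: Pe_def)
lemma Pe_r: "i \<noteq> 0 \<Longrightarrow> rep i = i \<Longrightarrow> Pe k i = real (sz 0) * of_bool (R i k) - real (sz i) * of_bool (R 0 k)"
  by (simp add: Pe_def)
lemma Pe_n: "rep i \<noteq> i \<Longrightarrow> Pe k i = of_bool (k = i) - of_bool (k = rep i)"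
  using rep0 by (auto simp add: Pe_def)
lemma Qe_0: "Qe 0 = (\<lambda>k. (1 / real N) * one k)" by (simp add: Qe_def fun_eq_iff)
lemma Qe_r: "j \<noteq> 0 \<Longrightarrow> rep j = j \<Longrightarrow> Qe j = (\<lambda>k. (1 / real (sz 0)) * ((1 / real (sz j)) * of_bool (R j k) - (1 / real N) * one k))"
  by (simp add: Qe_def fun_eq_iff)
lemma Qe_n: "rep j \<noteq> j \<Longrightarrow> Qe j = (\<lambda>k. of_bool (k = j) - (1 / real (sz j)) * of_bool (R j k))"
  using rep0 by (auto simp add: Qe_def fun_eq_iff)

lemma QP_entry: assumes j: "j < N" and i: "i < N"
  shows "ip (\<lambda>k. Qe j k) (\<lambda>k. Pe k i) = of_bool (j = i)"
proof -
  have s0: "real (sz 0) > 0" using sz_pos Npos by simp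
  have si: "real (sz i) > 0" using sz_pos i by simp
  have sj: "real (sz j) > 0" using sz_pos j by simp
  have N: "real N > 0" using Npos by simp
  have ri: "rep i < N" using rep_lt i by simp
  have R0i: "R 0 i = R i 0" using Rcomm by blast
  show ?thesis
  proof (cases "j = 0")
    case True
    show ?thesis
    proof (cases "i = 0")
      case True
      then show ?thesis using \<open>j = 0\<close> N by (simp add: ip_simps Qe_0 Pe_0; (simp add: one_def field_simps)?)
    next
      case False
      show ?thesis
      proof (cases "rep i = i")
        case True
        then show ?thesis using \<open>j = 0\<close> False N i Npos by (simp add: ip_simps Qe_0 Pe_r; (simp add: one_def field_simps)?)
      next
        case False
        moreover have "i \<noteq> 0" using False rep0 by (cases i) auto
        ultimately show ?thesis using \<open>j = 0\<close> N i ri by (simp add: ip_simps Qe_0 Pe_n; (simp add: one_def field_simps)?)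
      qed
    qed
  next
    case j0: False
    show ?thesis
    proof (cases "rep j = j")
      case jr: True
      have nj0: "\<not> R j 0" using R_rep_iff[of j 0] jr rep0 j0 j Npos by auto
      show ?thesis
      proof (cases "i = 0")
        case True
        then show ?thesis using j0 jr N s0 sj j by (simp add: ip_simps Qe_r Pe_0; (simp add: one_def field_simps)?)
      next
        case i0: False
        show ?thesis
        proof (cases "rep i = i")
          case True
          have c1: "R i j = R j i" "R 0 j = R j 0" using Rcomm by blast+
          have "R j i \<longleftrightarrow> j = i" using R_rep_iff[of j i] True jr i j by blast
          then show ?thesis using j0 jr i0 nj0 N s0 sj j i Npos c1 True
            by (cases "j = i"; simp add: ip_simps Qe_r Pe_r; (simp add: one_def field_simps)?)
        next
          case False
          have "R j i = R j (rep i)" using rep_R[of i] Rtrans[of j i "rep i"] Rtrans[of j "rep i" i] Rsym i ri j by blast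
          moreover have "j \<noteq> i" using jr False by auto
          ultimately show ?thesis using False j0 jr N s0 sj j i ri by (simp add: ip_simps Qe_r Pe_n; (simp add: one_def field_simps)?)
        qed
      qed
    next
      case jn: False
      show ?thesis
      proof (cases "i = 0")
        case True
        moreover have "j \<noteq> 0" using jn rep0 by (cases j) auto
        ultimately show ?thesis using jn N s0 sj j by (simp add: ip_simps Qe_n Pe_0; (simp add: one_def field_simps)?)
      next
        case i0: False
        show ?thesis
        proof (cases "rep i = i")
          case True
          have "R j i \<Longrightarrow> sz j = sz i" using sz_eq i j by blast
          moreover have c1: "R i j = R j i" "R 0 j = R j 0" using Rcomm by blast+
          moreover have "j \<noteq> i" using jn True by auto
          ultimately show ?thesis using True jn i0 N s0 sj j i Npos
            by (cases "R j i"; cases "R j 0"; simp add: ip_simps Qe_n Pe_r; (simp add: one_def field_simps)?)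
        next
          case False
          have "R j i = R j (rep i)" using rep_R[of i] Rtrans[of j i "rep i"] Rtrans[of j "rep i" i] Rsym i ri j by blast
          moreover have "j \<noteq> rep i" using jn rep_rep[OF i] by auto
          ultimately show ?thesis using False jn N s0 sj j i ri by (simp add: ip_simps Qe_n Pe_n; (simp add: one_def field_simps)?)
        qed
      qed
    qed
  qed
qed


lemma MP_entry: assumes k: "k < N" and j: "j < N"
  shows "ip (Me k) (\<lambda>i. Pe i j) = Pe k j * lam j"
proof -
  have N: "real N > 0" using Npos by simp
  have rj: "rep j < N" using rep_lt j by simp
  show ?thesis
  proof (cases "j = 0")
    case True
    then show ?thesis using k by (simp add: Me_def lam_def ip_simps Pe_0; (simp add: one_def field_simps)?)
  next
    case j0: False
    show ?thesis
    proof (cases "rep j = j")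
      case True
      have c1: "R j k = R k j" "R 0 k = R k 0" using Rcomm by blast+
      have e1: "R k j \<Longrightarrow> sz k = sz j" using sz_eq k j by blast
      have e2: "R k 0 \<Longrightarrow> sz k = sz 0" using sz_eq k Npos by blast
      show ?thesis using True j0 k j Npos c1 e1 e2
        by (cases "R k j"; cases "R k 0"; simp add: Me_def lam_def ip_simps Pe_r; (simp add: one_def field_simps)?)
    next
      case False
      have c1: "R k (rep j) = R k j" using rep_R[of j] Rtrans[of k j "rep j"] Rtrans[of k "rep j" j] Rsym k rj j by blast
      have e1: "sz (rep j) = sz j" using sz_eq[of "rep j" j] rj j rep_R[of j] Rsym by blast
      have "j \<noteq> rep j" using False by simp
      moreover have "j \<noteq> 0" using j0 .
      ultimately show ?thesis using False k j rj c1 e1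
        by (cases "k = j"; cases "k = rep j"; simp add: Me_def lam_def ip_simps Pe_n; (simp add: one_def field_simps)?)
    qed
  qed
qed

definition Pm where "Pm = mat N N (\<lambda>(k, i). Pe k i)"
definition Qm where "Qm = mat N N (\<lambda>(j, k). Qe j k)"
definition Lm where "Lm = mat N N (\<lambda>(i, j). if i = j then lam j else 0)"
definition Mm where "Mm = mat N N (\<lambda>(k, i). Me k i)"

lemma QP: "Qm * Pm = 1\<^sub>m N"
  apply (rule eq_matI)
  using QP_entry by (auto simp: Qm_def Pm_def mat_mult_entry ip_def)

lemma MP: "Mm * Pm = Pm * Lm"
proof (rule eq_matI)
  fix k j assume kj: "k < dim_row (Pm * Lm)" "j < dim_col (Pm * Lm)"
  hence kj': "k < N" "j < N" by (auto simp: Pm_def Lm_def)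
  have "(Pm * Lm) $$ (k, j) = (\<Sum>i=0..<N. Pe k i * (if i = j then lam j else 0))"
    using kj' by (simp add: Pm_def Lm_def mat_mult_entry)
  also have "\<dots> = (\<Sum>i=0..<N. if i = j then Pe k j * lam j else 0)"
    by (rule sum.cong) auto
  also have "\<dots> = Pe k j * lam j" using kj' by (simp add: sum.delta)
  also have "\<dots> = (Mm * Pm) $$ (k, j)"
    using MP_entry[OF kj'] kj' by (simp add: Mm_def Pm_def mat_mult_entry ip_def)
  finally show "(Mm * Pm) $$ (k, j) = (Pm * Lm) $$ (k, j)" by simp
qed (auto simp: Mm_def Pm_def Lm_def)

lemma char_poly_Mm: "char_poly Mm = (\<Prod>j=0..<N. [:- lam j, 1:])"
proof -
  have C: "Pm \<in> carrier_mat N N" "Qm \<in> carrier_mat N N" "Lm \<in> carrier_mat N N" "Mm \<in> carrier_mat N N"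
    by (auto simp: Pm_def Qm_def Lm_def Mm_def)
  have PQ: "Pm * Qm = 1\<^sub>m N" using mat_mult_left_right_inverse[OF C(2) C(1) QP] .
  have "Mm = Mm * (Pm * Qm)" using PQ C by simp
  also have "\<dots> = (Mm * Pm) * Qm" using C by (simp add: assoc_mult_mat)
  also have "\<dots> = Pm * Lm * Qm" using MP by simp
  finally have "similar_mat Mm Lm"
    using similar_matI[of Mm Lm Pm Qm N] C PQ QP by auto
  hence "char_poly Mm = char_poly Lm" by (rule char_poly_similar)
  also have "\<dots> = (\<Prod> a \<leftarrow> diag_mat Lm. [:- a, 1:])"
    by (rule char_poly_upper_triangular[OF C(3)]) (auto simp: upper_triangular_def Lm_def)
  also have "\<dots> = (\<Prod>j=0..<N. [:- lam j, 1:])"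
    using prod.distinct_set_conv_list[of "[0..<N]" "\<lambda>j. [:- lam j, 1:]"]
    apply (simp add: diag_mat_def Lm_def comp_def)
    apply (rule arg_cong[where f=prod_list], rule map_cong, auto)
    done
  finally show ?thesis .
qed


definition closed where "closed S \<longleftrightarrow> S \<subseteq> {0..<N} \<and> (\<forall>i\<in>S. \<forall>k<N. R i k \<longrightarrow> k \<in> S)"

lemma count_reps: assumes "closed S"
  shows "(\<Sum>j\<in>S. 1 / real (sz j)) = real (card (S \<inter> {j. rep j = j}))"
proof -
  have S: "S \<subseteq> {0..<N}" "\<And>i k. i \<in> S \<Longrightarrow> k < N \<Longrightarrow> R i k \<Longrightarrow> k \<in> S"
    using assms unfolding closed_def by auto
  have fin: "finite S" using S(1) finite_subset by blast
  have img: "rep ` S = S \<inter> {j. rep j = j}"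
  proof
    show "rep ` S \<subseteq> S \<inter> {j. rep j = j}"
    proof
      fix r assume "r \<in> rep ` S"
      then obtain j where j: "j \<in> S" "r = rep j" by auto
      have jN: "j < N" using j S by auto
      have "rep j \<in> S" by (rule S(2)[OF j(1) rep_lt[OF jN] rep_R[of j]])
      moreover have "rep (rep j) = rep j" by (rule rep_rep[OF jN])
      ultimately show "r \<in> S \<inter> {j. rep j = j}" using j(2) by simp
    qed
    show "S \<inter> {j. rep j = j} \<subseteq> rep ` S"
    proof
      fix r assume "r \<in> S \<inter> {j. rep j = j}"
      hence "r = rep r" "r \<in> S" by auto
      thus "r \<in> rep ` S" by (rule image_eqI)
    qed
  qed
  have "(\<Sum>j\<in>S. 1 / real (sz j)) = (\<Sum>r\<in>rep ` S. \<Sum>j\<in>{j\<in>S. rep j = r}. 1 / real (sz j))"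
    by (rule sum.image_gen[OF fin])
  also have "\<dots> = (\<Sum>r\<in>rep ` S. 1)"
  proof (rule sum.cong[OF refl])
    fix r assume "r \<in> rep ` S"
    hence r: "r \<in> S" "rep r = r" using img by auto
    have rN: "r < N" using r S by auto
    have cl: "{j\<in>S. rep j = r} = cls r"
    proof
      show "{j\<in>S. rep j = r} \<subseteq> cls r"
      proof
        fix j assume j: "j \<in> {j\<in>S. rep j = r}"
        hence "j < N" "R j r" using S rep_R[of j] by auto
        thus "j \<in> cls r" unfolding cls_def using Rsym by auto
      qed
      show "cls r \<subseteq> {j\<in>S. rep j = r}"
      proof
        fix j assume "j \<in> cls r"
        hence j: "j < N" "R r j" unfolding cls_def by auto
        have "j \<in> S" using S(2)[OF r(1) j(1) j(2)] .
        moreover have "rep j = r" using rep_eq[OF rN j(1) j(2)] r by simp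
        ultimately show "j \<in> {j\<in>S. rep j = r}" by simp
      qed
    qed
    have "(\<Sum>j\<in>cls r. 1 / real (sz j)) = (\<Sum>j\<in>cls r. 1 / real (sz r))"
    proof (rule sum.cong[OF refl])
      fix j assume "j \<in> cls r"
      hence j: "j < N" "R r j" unfolding cls_def by auto
      have "sz r = sz j" by (rule sz_eq[OF rN j(1) j(2)])
      thus "1 / real (sz j) = 1 / real (sz r)" by simp
    qed
    also have "\<dots> = 1" using sz_pos[OF rN] by (simp add: sz_def)
    finally show "(\<Sum>j\<in>{j\<in>S. rep j = r}. 1 / real (sz j)) = 1" using cl by simp
  qed
  also have "\<dots> = real (card (S \<inter> {j. rep j = j}))" using img by simp
  finally show ?thesis .
qed

lemma char_poly_split:
  assumes S1: "closed S1" and S2: "closed S2" and U: "S1 \<union> S2 = {0..<N}" and D: "S1 \<inter> S2 = {}"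
    and a: "\<And>j. j \<in> S1 \<Longrightarrow> sz j = a" and b: "\<And>j. j \<in> S2 \<Longrightarrow> sz j = b"
    and c1: "card S1 = a * p" and c2: "card S2 = b * q" and ne: "S1 \<noteq> {}" "S2 \<noteq> {}"
  shows "char_poly Mm = [:0, 1:] * [:- real N, 1:] ^ (p + q - 1)
     * [:- (real N + real a), 1:] ^ (a * p - p) * [:- (real N + real b), 1:] ^ (b * q - q)"
proof -
  let ?A = "{j. rep j = j}"
  have f1: "finite S1" "finite S2" using S1 S2 unfolding closed_def by (auto intro: finite_subset)
  have a0: "S1 \<noteq> {} \<Longrightarrow> a > 0" using a sz_pos S1 unfolding closed_def by fastforce
  have b0: "S2 \<noteq> {} \<Longrightarrow> b > 0" using b sz_pos S2 unfolding closed_def by fastforce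
  have p: "card (S1 \<inter> ?A) = p"
  proof -
    have "real (card (S1 \<inter> ?A)) = (\<Sum>j\<in>S1. 1 / real (sz j))" using count_reps[OF S1] by simp
    also have "\<dots> = (\<Sum>j\<in>S1. 1 / real a)" using a by simp
    also have "\<dots> = real p"
      using c1 a0 ne by simp
    finally show ?thesis by simp
  qed
  have q: "card (S2 \<inter> ?A) = q"
  proof -
    have "real (card (S2 \<inter> ?A)) = (\<Sum>j\<in>S2. 1 / real (sz j))" using count_reps[OF S2] by simp
    also have "\<dots> = (\<Sum>j\<in>S2. 1 / real b)" using b by simp
    also have "\<dots> = real q"
      using c2 b0 ne by simp
    finally show ?thesis by simp
  qed
  have ps: "card (S1 - ?A) = a * p - p"
    using card_Diff_subset_Int[of S1 ?A] f1 c1 p by (simp add: Int_commute)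
  have qs: "card (S2 - ?A) = b * q - q"
    using card_Diff_subset_Int[of S2 ?A] f1 c2 q by (simp add: Int_commute)
  have Ac: "card ({0..<N} \<inter> ?A) = p + q"
  proof -
    have "{0..<N} \<inter> ?A = (S1 \<inter> ?A) \<union> (S2 \<inter> ?A)" using U by auto
    moreover have "card ((S1 \<inter> ?A) \<union> (S2 \<inter> ?A)) = card (S1 \<inter> ?A) + card (S2 \<inter> ?A)"
      by (rule card_Un_disjoint) (use f1 D in auto)
    ultimately show ?thesis using p q by simp
  qed
  have 0: "0 \<in> {0..<N} \<inter> ?A" using Npos rep0 by simp
  have "char_poly Mm = (\<Prod>j\<in>{0..<N}. [:- lam j, 1:])" using char_poly_Mm by simp
  also have "\<dots> = (\<Prod>j\<in>{0..<N} \<inter> ?A. [:- lam j, 1:]) * (\<Prod>j\<in>{0..<N} - ?A. [:- lam j, 1:])"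
  proof -
    have "{0..<N} = ({0..<N} \<inter> ?A) \<union> ({0..<N} - ?A)" by auto
    hence "(\<Prod>j\<in>{0..<N}. [:- lam j, 1:]) = (\<Prod>j\<in>({0..<N} \<inter> ?A) \<union> ({0..<N} - ?A). [:- lam j, 1:])" by simp
    also have "\<dots> = (\<Prod>j\<in>{0..<N} \<inter> ?A. [:- lam j, 1:]) * (\<Prod>j\<in>{0..<N} - ?A. [:- lam j, 1:])"
      by (rule prod.union_disjoint) auto
    finally show ?thesis .
  qed
  also have "(\<Prod>j\<in>{0..<N} \<inter> ?A. [:- lam j, 1:]) = [:- lam 0, 1:] * (\<Prod>j\<in>{0..<N} \<inter> ?A - {0}. [:- lam j, 1:])"
    by (rule prod.remove[OF _ 0]) simp
  also have "(\<Prod>j\<in>{0..<N} \<inter> ?A - {0}. [:- lam j, 1:]) = (\<Prod>j\<in>{0..<N} \<inter> ?A - {0}. [:- real N, 1:])"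
    by (rule prod.cong[OF refl]) (auto simp: lam_def)
  also have "\<dots> = [:- real N, 1:] ^ (p + q - 1)" using Ac 0 by simp
  also have "{0..<N} - ?A = (S1 - ?A) \<union> (S2 - ?A)" using U by auto
  also have "(\<Prod>j\<in>(S1 - ?A) \<union> (S2 - ?A). [:- lam j, 1:]) = (\<Prod>j\<in>S1 - ?A. [:- lam j, 1:]) * (\<Prod>j\<in>S2 - ?A. [:- lam j, 1:])"
    by (rule prod.union_disjoint) (use f1 D in auto)
  also have "(\<Prod>j\<in>S1 - ?A. [:- lam j, 1:]) = (\<Prod>j\<in>S1 - ?A. [:- (real N + real a), 1:])"
    by (rule prod.cong[OF refl]) (auto simp: lam_def a rep0)
  also have "(\<Prod>j\<in>S2 - ?A. [:- lam j, 1:]) = (\<Prod>j\<in>S2 - ?A. [:- (real N + real b), 1:])"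
    by (rule prod.cong[OF refl]) (auto simp: lam_def b rep0)
  finally show ?thesis using ps qs by (simp add: lam_def mult.assoc)
qed

end

lemma bridge:
  fixes V :: "'a set" and f :: "nat \<Rightarrow> 'a" and Rv :: "'a \<Rightarrow> 'a \<Rightarrow> bool" and d :: "'a \<Rightarrow> 'a \<Rightarrow> nat"
  assumes fin: "finite V" and Vne: "V \<noteq> {}"
    and bij: "bij_betw f {0..<card V} V"
    and rfl: "\<And>u. Rv u u" and sym: "\<And>u v. Rv u v \<Longrightarrow> Rv v u"
    and trans: "\<And>u v w. u \<in> V \<Longrightarrow> v \<in> V \<Longrightarrow> w \<in> V \<Longrightarrow> Rv u v \<Longrightarrow> Rv v w \<Longrightarrow> Rv u w"
    and d0: "\<And>u. u \<in> V \<Longrightarrow> d u u = 0"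
    and d2: "\<And>u v. u \<in> V \<Longrightarrow> v \<in> V \<Longrightarrow> u \<noteq> v \<Longrightarrow> Rv u v \<Longrightarrow> d u v = 2"
    and d1: "\<And>u v. u \<in> V \<Longrightarrow> v \<in> V \<Longrightarrow> \<not> Rv u v \<Longrightarrow> d u v = 1"
  shows "eqv (card V) (\<lambda>i j. Rv (f i) (f j))"
    and "mat (card V) (card V) (\<lambda>(i, j). (if i = j then real (\<Sum>u\<in>V. d u (f i)) else 0) - real (d (f i) (f j)))
       = eqv.Mm (card V) (\<lambda>i j. Rv (f i) (f j))"
proof -
  let ?N = "card V"
  let ?R = "\<lambda>i j. Rv (f i) (f j)"
  have Npos: "0 < ?N" using fin Vne by (simp add: card_gt_0_iff)
  have fV: "\<And>i. i < ?N \<Longrightarrow> f i \<in> V" using bij bij_betwE by fastforce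
  have finj: "\<And>i j. i < ?N \<Longrightarrow> j < ?N \<Longrightarrow> f i = f j \<Longrightarrow> i = j"
    using bij unfolding bij_betw_def inj_on_def by auto
  show E: "eqv ?N ?R"
  proof (unfold_locales)
    fix i j k assume "i < ?N" "j < ?N" "k < ?N" "?R i j" "?R j k"
    thus "?R i k" using trans[of "f i" "f j" "f k"] fV by blast
  qed (use Npos rfl sym in auto)
  show "mat ?N ?N (\<lambda>(i, j). (if i = j then real (\<Sum>u\<in>V. d u (f i)) else 0) - real (d (f i) (f j))) = eqv.Mm ?N ?R"
  proof (rule eq_matI)
    fix i j assume ij: "i < dim_row (eqv.Mm ?N ?R)" "j < dim_col (eqv.Mm ?N ?R)"
    hence i: "i < ?N" and j: "j < ?N" by (auto simp: eqv.Mm_def[OF E])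
    have dk: "\<And>k. k < ?N \<Longrightarrow> real (d (f k) (f i)) = 1 + of_bool (?R i k) - 2 * of_bool (k = i)"
    proof -
      fix k assume k: "k < ?N"
      show "real (d (f k) (f i)) = 1 + of_bool (?R i k) - 2 * of_bool (k = i)"
      proof (cases "k = i")
        case True thus ?thesis using d0 fV[OF i] rfl by simp
      next
        case False
        hence ne: "f k \<noteq> f i" using finj[OF k i] by blast
        show ?thesis
        proof (cases "?R i k")
          case True
          hence "Rv (f k) (f i)" using sym by blast
          thus ?thesis using d2[OF fV[OF k] fV[OF i] ne] True False by simp
        next
          case F2: False
          hence "\<not> Rv (f k) (f i)" using sym by blast
          thus ?thesis using d1[OF fV[OF k] fV[OF i]] F2 False by simp
        qed
      qed
    qed
    have "(\<Sum>u\<in>V. d u (f i)) = (\<Sum>k\<in>{0..<?N}. d (f k) (f i))"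
      using sum.reindex_bij_betw[OF bij, of "\<lambda>u. d u (f i)"] by simp
    hence "real (\<Sum>u\<in>V. d u (f i)) = (\<Sum>k=0..<?N. real (d (f k) (f i)))" by simp
    also have "\<dots> = (\<Sum>k=0..<?N. 1 + of_bool (?R i k) - 2 * of_bool (k = i))"
      by (rule sum.cong[OF refl]) (use dk in auto)
    also have "\<dots> = real ?N + real (eqv.sz ?N ?R i) - 2"
      using eqv.sum_R[OF E i] i by (simp add: sum.distrib sum_subtractf sum_distrib_left[symmetric] of_bool_def)
    finally have T: "real (\<Sum>u\<in>V. d u (f i)) = real ?N + real (eqv.sz ?N ?R i) - 2" .
    have dij: "i \<noteq> j \<Longrightarrow> real (d (f i) (f j)) = 1 + of_bool (?R i j)"
      using d1 d2 fV[OF i] fV[OF j] finj[OF i j] by (cases "?R i j") auto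
    show "mat ?N ?N (\<lambda>(i, j). (if i = j then real (\<Sum>u\<in>V. d u (f i)) else 0) - real (d (f i) (f j))) $$ (i, j) = eqv.Mm ?N ?R $$ (i, j)"
      using i j T dij d0[OF fV[OF i]] rfl
      by (cases "i = j") (auto simp: eqv.Mm_def[OF E] eqv.Me_def[OF E] eqv.one_def[OF E])
  qed (auto simp: eqv.Mm_def[OF E])
qed



locale quat = group G for G (structure) +
  fixes x y :: 'a and n :: nat
  assumes n2: "n \<ge> 2"
    and xc: "x \<in> carrier G" and yc: "y \<in> carrier G"
    and x2n: "x [^] (2 * n) = \<one>"
    and xny: "x [^] n = y [^] (2::nat)"
    and yx: "y \<otimes> x = inv x \<otimes> y"
    and gen: "carrier G = generate G {x, y}"
    and fin: "finite (carrier G)" and card4: "card (carrier G) = 4 * n"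
begin

definition X :: "int \<Rightarrow> 'a" where "X a = x [^] a"
definition Y :: "int \<Rightarrow> 'a" where "Y a = X a \<otimes> y"

lemma X_c[simp]: "X a \<in> carrier G" unfolding X_def using xc by simp
lemma Y_c[simp]: "Y a \<in> carrier G" unfolding Y_def using yc by simp

lemma X_add: "X (a + b) = X a \<otimes> X b" unfolding X_def using int_pow_mult xc by simp
lemma X_0[simp]: "X 0 = \<one>" unfolding X_def by simp

lemma X_2n: "X (2 * int n * q) = \<one>"
proof -
  have "X (2 * int n) = \<one>" unfolding X_def using x2n int_pow_int[of G x "2*n"] by simp
  hence "X (2 * int n * q) = \<one> [^] q" unfolding X_def using int_pow_pow xc by metis
  thus ?thesis by simp
qed

lemma X_mod: "X a = X (a mod (2 * int n))"
proof -
  have "a = 2 * int n * (a div (2 * int n)) + a mod (2 * int n)" by simp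
  hence "X a = X (2 * int n * (a div (2 * int n))) \<otimes> X (a mod (2 * int n))" by (metis X_add)
  thus ?thesis using X_2n by simp
qed

lemma y_X_nat: "y \<otimes> x [^] (k::nat) = inv x [^] k \<otimes> y"
proof (induction k)
  case 0 then show ?case using yc by simp
next
  case (Suc k)
  have "y \<otimes> x [^] Suc k = (y \<otimes> x [^] k) \<otimes> x" using xc yc by (simp add: m_assoc)
  also have "\<dots> = inv x [^] k \<otimes> (y \<otimes> x)" using Suc xc yc by (simp add: m_assoc)
  also have "\<dots> = inv x [^] k \<otimes> inv x \<otimes> y" using yx xc yc by (simp add: m_assoc)
  also have "\<dots> = inv x [^] Suc k \<otimes> y" using xc by simp
  finally show ?case .
qed

lemma y_X: "y \<otimes> X a = X (- a) \<otimes> y"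
proof -
  have nat: "y \<otimes> X (int k) = X (- int k) \<otimes> y" for k
    unfolding X_def using y_X_nat[of k] xc by (simp add: int_pow_int int_pow_neg_int nat_pow_inv)
  show ?thesis
  proof (cases "a \<ge> 0")
    case True
    then obtain k where "a = int k" using nonneg_eq_int by blast
    then show ?thesis using nat by simp
  next
    case False
    then obtain k where k: "a = - int k" by (metis neg_0_le_iff_le nonneg_int_cases le_cases minus_minus)
    have inv1: "X (int k) \<otimes> X (- int k) = \<one>" using X_add[of "int k" "- int k", symmetric] by simp
    have "X (int k) \<otimes> y = X (int k) \<otimes> y \<otimes> (X (int k) \<otimes> X (- int k))" using inv1 yc by simp
    also have "\<dots> = X (int k) \<otimes> (y \<otimes> X (int k)) \<otimes> X (- int k)" using yc by (simp add: m_assoc)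
    also have "\<dots> = X (int k) \<otimes> (X (- int k) \<otimes> y) \<otimes> X (- int k)" using nat by simp
    also have "\<dots> = (X (int k) \<otimes> X (- int k)) \<otimes> y \<otimes> X (- int k)" using yc by (simp add: m_assoc)
    also have "\<dots> = y \<otimes> X (- int k)" using inv1 yc by simp
    finally show ?thesis using k by simp
  qed
qed


lemma yy: "y \<otimes> y = X (int n)"
  unfolding X_def using xny yc xc by (simp add: int_pow_int numeral_2_eq_2)

lemma XX: "X a \<otimes> X b = X (a + b)" by (simp add: X_add)
lemma XY: "X a \<otimes> Y b = Y (a + b)" unfolding Y_def using yc by (simp add: X_add m_assoc)
lemma YX: "Y a \<otimes> X b = Y (a - b)"
proof -
  have "Y a \<otimes> X b = X a \<otimes> (y \<otimes> X b)" unfolding Y_def using yc by (simp add: m_assoc)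
  also have "\<dots> = X a \<otimes> X (- b) \<otimes> y" using y_X yc by (simp add: m_assoc)
  finally show ?thesis unfolding Y_def by (simp add: X_add[symmetric])
qed
lemma YY: "Y a \<otimes> Y b = X (a - b + int n)"
proof -
  have "Y a \<otimes> Y b = (Y a \<otimes> X b) \<otimes> y" unfolding Y_def using yc by (simp add: m_assoc)
  also have "\<dots> = X (a - b) \<otimes> (y \<otimes> y)" unfolding YX unfolding Y_def using yc by (simp add: m_assoc)
  finally show ?thesis by (simp add: yy X_add)
qed

lemma inv_x: "inv x = X (-1)" unfolding X_def using xc by (simp add: int_pow_neg)
lemma inv_y: "inv y = Y (int n)"
proof -
  have "Y (int n) \<otimes> y = \<one>"
    unfolding Y_def using yc X_2n[of 1] by (simp add: m_assoc yy X_add[symmetric])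
  thus ?thesis using inv_equality[OF _ yc Y_c] by blast
qed

definition E where "E = range X \<union> range Y"

lemma gen_E: "generate G {x, y} \<subseteq> E"
proof
  fix g assume "g \<in> generate G {x, y}"
  thus "g \<in> E"
  proof (induction rule: generate.induct)
    case one
    have "\<one> = X 0" by simp
    then show ?case unfolding E_def by blast
  next
    case (incl h)
    have "x = X 1" unfolding X_def using xc by simp
    moreover have "y = Y 0" unfolding Y_def using yc by simp
    ultimately show ?case using incl unfolding E_def by auto
  next
    case (inv h)
    then show ?case using inv_x inv_y unfolding E_def by auto
  next
    case (eng h1 h2)
    then show ?case unfolding E_def using XX XY YX YY by auto
  qed
qed

definition phi :: "nat \<Rightarrow> 'a" where
  "phi k = (if k < 2 * n then X (int k) else Y (int k - 2 * int n))"

lemma Y_mod: "Y a = Y (a mod (2 * int n))" unfolding Y_def using X_mod by metis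

lemma carrier_phi: "carrier G = phi ` {0..<4 * n}"
proof
  show "carrier G \<subseteq> phi ` {0..<4 * n}"
  proof
    fix g assume "g \<in> carrier G"
    hence "g \<in> E" using gen gen_E by auto
    then obtain a where "g = X a \<or> g = Y a" unfolding E_def by auto
    moreover have n0: "0 < 2 * int n" using n2 by simp
    define m where "m = nat (a mod (2 * int n))"
    have m: "int m = a mod (2 * int n)" "m < 2 * n" unfolding m_def using n0 by (auto simp: nat_less_iff)
    have "X a = phi m" using m X_mod[of a] unfolding phi_def by simp
    moreover have "Y a = phi (m + 2 * n)" using m Y_mod[of a] unfolding phi_def by simp
    moreover have "m < 4 * n" "m + 2 * n < 4 * n" using m by auto
    ultimately show "g \<in> phi ` {0..<4 * n}" by force
  qed
  show "phi ` {0..<4 * n} \<subseteq> carrier G" unfolding phi_def by auto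
qed

lemma phi_inj: "inj_on phi {0..<4 * n}"
  by (rule eq_card_imp_inj_on) (use carrier_phi card4 in auto)

lemma X_eq_iff: "X a = X b \<longleftrightarrow> a mod (2 * int n) = b mod (2 * int n)"
proof
  assume h: "a mod (2 * int n) = b mod (2 * int n)"
  have "X a = X (a mod (2 * int n))" by (rule X_mod)
  also have "\<dots> = X (b mod (2 * int n))" using h by (rule arg_cong)
  also have "\<dots> = X b" by (rule X_mod[symmetric])
  finally show "X a = X b" .
next
  assume eq: "X a = X b"
  have n0: "0 < 2 * int n" using n2 by simp
  define ma where "ma = nat (a mod (2 * int n))"
  define mb where "mb = nat (b mod (2 * int n))"
  have m: "int ma = a mod (2 * int n)" "ma < 2 * n" "int mb = b mod (2 * int n)" "mb < 2 * n"
    unfolding ma_def mb_def using n0 by (auto simp: nat_less_iff)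
  have "phi ma = X (int ma)" using m unfolding phi_def by auto
  also have "\<dots> = X a" using X_mod[of a] m(1) by simp
  also have "\<dots> = X b" by (rule eq)
  also have "\<dots> = X (int mb)" using X_mod[of b] m(3) by simp
  also have "\<dots> = phi mb" using m unfolding phi_def by auto
  finally have "phi ma = phi mb" .
  hence "ma = mb" by (rule inj_onD[OF phi_inj]) (use m in auto)
  thus "a mod (2 * int n) = b mod (2 * int n)" using m by simp
qed

lemma X_ne_Y: "X a \<noteq> Y b"
proof
  assume eq: "X a = Y b"
  have n0: "0 < 2 * int n" using n2 by simp
  define ma where "ma = nat (a mod (2 * int n))"
  define mb where "mb = nat (b mod (2 * int n))"
  have m: "int ma = a mod (2 * int n)" "ma < 2 * n" "int mb = b mod (2 * int n)" "mb < 2 * n"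
    unfolding ma_def mb_def using n0 by (auto simp: nat_less_iff)
  have "phi ma = X (int ma)" using m unfolding phi_def by auto
  also have "\<dots> = X a" using X_mod[of a] m(1) by simp
  also have "\<dots> = Y b" by (rule eq)
  also have "\<dots> = Y (int mb)" using Y_mod[of b] m(3) by simp
  also have "\<dots> = phi (mb + 2 * n)" using m unfolding phi_def by auto
  finally have "phi ma = phi (mb + 2 * n)" .
  hence "ma = mb + 2 * n" by (rule inj_onD[OF phi_inj]) (use m in auto)
  thus False using m by simp
qed

lemma Y_ne_X: "Y b \<noteq> X a" using X_ne_Y by metis

lemma Y_eq_iff: "Y a = Y b \<longleftrightarrow> a mod (2 * int n) = b mod (2 * int n)"
  unfolding Y_def using X_eq_iff right_cancel[OF yc X_c X_c] by simp

lemma mod2n_iff: "(a::int) mod (2 * int n) = b mod (2 * int n) \<longleftrightarrow> 2 * int n dvd a - b"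
  by (simp add: mod_eq_dvd_iff)

lemma XY_comm: "X a \<otimes> Y b = Y b \<otimes> X a \<longleftrightarrow> int n dvd a"
proof -
  have "X a \<otimes> Y b = Y b \<otimes> X a \<longleftrightarrow> 2 * int n dvd (a + b) - (b - a)" by (simp add: XY YX Y_eq_iff mod2n_iff)
  also have "(a + b) - (b - a) = 2 * a" by simp
  also have "2 * int n dvd 2 * a \<longleftrightarrow> int n dvd a" by simp
  finally show ?thesis .
qed

lemma YY_comm: "Y a \<otimes> Y b = Y b \<otimes> Y a \<longleftrightarrow> int n dvd a - b"
proof -
  have "Y a \<otimes> Y b = Y b \<otimes> Y a \<longleftrightarrow> 2 * int n dvd (a - b + int n) - (b - a + int n)" by (simp add: YY X_eq_iff mod2n_iff)
  also have "(a - b + int n) - (b - a + int n) = 2 * (a - b)" by simp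
  also have "2 * int n dvd 2 * (a - b) \<longleftrightarrow> int n dvd a - b" by (rule dvd_times_left_cancel_iff) simp
  finally show ?thesis .
qed

lemma XX_comm: "X a \<otimes> X b = X b \<otimes> X a" by (simp add: XX add.commute)


lemma elem_cases: "g \<in> carrier G \<Longrightarrow> (\<exists>a. g = X a) \<or> (\<exists>b. g = Y b)"
  using gen gen_E unfolding E_def by auto

lemma n_not_dvd_1: "\<not> int n dvd 1" using n2 by simp

lemma X_center: "X a \<in> grp_center G \<longleftrightarrow> int n dvd a"
proof
  assume "X a \<in> grp_center G"
  hence "X a \<otimes> Y 0 = Y 0 \<otimes> X a" unfolding grp_center_def by auto
  thus "int n dvd a" using XY_comm by simp
next
  assume d: "int n dvd a"
  have "\<forall>g\<in>carrier G. X a \<otimes> g = g \<otimes> X a"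
  proof
    fix g assume "g \<in> carrier G"
    then consider c where "g = X c" | c where "g = Y c" using elem_cases by blast
    thus "X a \<otimes> g = g \<otimes> X a"
    proof cases
      case 1 thus ?thesis using XX_comm by simp
    next
      case 2 thus ?thesis using XY_comm d by simp
    qed
  qed
  thus "X a \<in> grp_center G" unfolding grp_center_def by simp
qed

lemma Y_center: "Y b \<notin> grp_center G"
proof
  assume "Y b \<in> grp_center G"
  hence "X 1 \<otimes> Y b = Y b \<otimes> X 1" unfolding grp_center_def by auto
  thus False using XY_comm n_not_dvd_1 by simp
qed

lemma V_char: "u \<in> nc_vertices G \<longleftrightarrow> (\<exists>a. u = X a \<and> \<not> int n dvd a) \<or> (\<exists>b. u = Y b)"
proof
  assume "u \<in> nc_vertices G"
  hence u: "u \<in> carrier G" "u \<notin> grp_center G" unfolding nc_vertices_def by auto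
  from elem_cases[OF u(1)] show "(\<exists>a. u = X a \<and> \<not> int n dvd a) \<or> (\<exists>b. u = Y b)"
    using u(2) X_center by blast
next
  assume "(\<exists>a. u = X a \<and> \<not> int n dvd a) \<or> (\<exists>b. u = Y b)"
  thus "u \<in> nc_vertices G" unfolding nc_vertices_def using X_center Y_center by auto
qed

definition Rv where "Rv u v \<longleftrightarrow> u \<otimes> v = v \<otimes> u"

lemma Rv_simps:
  "Rv (X a) (X b)"
  "Rv (X a) (Y b) \<longleftrightarrow> int n dvd a"
  "Rv (Y b) (X a) \<longleftrightarrow> int n dvd a"
  "Rv (Y a) (Y b) \<longleftrightarrow> int n dvd a - b"
  unfolding Rv_def using XX_comm XY_comm YY_comm by (auto simp: eq_commute[of "Y b \<otimes> X a"])

definition Rot where "Rot = {u. \<exists>a. u = X a \<and> \<not> int n dvd a}"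
definition Ref where "Ref = range Y"

lemma V_Rot_Ref: "nc_vertices G = Rot \<union> Ref"
  unfolding Rot_def Ref_def using V_char by auto

lemma Rot_Ref_disj: "Rot \<inter> Ref = {}"
  unfolding Rot_def Ref_def using X_ne_Y Y_ne_X by auto

lemma Rv_trans: "u \<in> nc_vertices G \<Longrightarrow> v \<in> nc_vertices G \<Longrightarrow> w \<in> nc_vertices G \<Longrightarrow> Rv u v \<Longrightarrow> Rv v w \<Longrightarrow> Rv u w"
  unfolding V_char
  apply (elim disjE exE conjE)
  apply (simp_all add: Rv_simps)
proof -
  fix b ba bb :: int assume "int n dvd b - ba" "int n dvd ba - bb"
  hence "int n dvd (b - ba) + (ba - bb)" by (rule dvd_add)
  thus "int n dvd b - bb" by simp
qed


lemma Rv_refl: "Rv u u" unfolding Rv_def by simp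
lemma Rv_sym: "Rv u v \<Longrightarrow> Rv v u" unfolding Rv_def by simp

lemma adj_iff: "nc_adj G u v \<longleftrightarrow> u \<in> nc_vertices G \<and> v \<in> nc_vertices G \<and> \<not> Rv u v"
  unfolding nc_adj_def Rv_def by auto

lemma witness: assumes "u \<in> nc_vertices G" "v \<in> nc_vertices G" "Rv u v"
  shows "\<exists>w. nc_adj G u w \<and> nc_adj G w v"
proof -
  have Y0: "Y 0 \<in> nc_vertices G" and X1: "X 1 \<in> nc_vertices G" using V_char n_not_dvd_1 by auto
  from assms(1) consider a where "u = X a" "\<not> int n dvd a" | b where "u = Y b" unfolding V_char by blast
  thus ?thesis
  proof cases
    case 1
    from assms(2) consider c where "v = X c" "\<not> int n dvd c" | d where "v = Y d" unfolding V_char by blast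
    hence "\<exists>c. v = X c \<and> \<not> int n dvd c" using assms(3) 1 by cases (auto simp: Rv_simps)
    then obtain c where c: "v = X c" "\<not> int n dvd c" by blast
    show ?thesis using 1 c Y0 assms(1,2) by (intro exI[of _ "Y 0"]) (simp add: adj_iff Rv_simps)
  next
    case 2
    from assms(2) consider c where "v = X c" "\<not> int n dvd c" | d where "v = Y d" unfolding V_char by blast
    hence "\<exists>d. v = Y d" using assms(3) 2 by cases (auto simp: Rv_simps)
    then obtain d where d: "v = Y d" by blast
    show ?thesis using 2 d X1 assms(1,2) n_not_dvd_1 by (intro exI[of _ "X 1"]) (simp add: adj_iff Rv_simps)
  qed
qed

lemma walk0: "nc_walk G 0 u v \<longleftrightarrow> u = v \<and> u \<in> nc_vertices G"
  unfolding nc_walk_def by auto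

lemma walk1: "nc_walk G 1 u v \<longleftrightarrow> nc_adj G u v"
proof
  assume "nc_walk G 1 u v"
  then obtain p where "p 0 = u" "p 1 = v" "\<forall>i<1. nc_adj G (p i) (p (Suc i))" unfolding nc_walk_def by blast
  thus "nc_adj G u v" by auto
next
  assume a: "nc_adj G u v"
  hence "u \<in> nc_vertices G" unfolding nc_adj_def by simp
  thus "nc_walk G 1 u v" unfolding nc_walk_def using a
    by (intro exI[of _ "\<lambda>i. if i = 0 then u else v"]) auto
qed

lemma dist_0: "u \<in> nc_vertices G \<Longrightarrow> nc_dist G u u = 0"
  unfolding nc_dist_def using walk0 by (intro Least_equality) auto

lemma dist_1: assumes "u \<in> nc_vertices G" "v \<in> nc_vertices G" "\<not> Rv u v"
  shows "nc_dist G u v = 1"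
proof -
  have "u \<noteq> v" using assms(3) Rv_refl by blast
  have "nc_walk G 1 u v" using walk1 adj_iff assms by simp
  moreover have "\<And>k. nc_walk G k u v \<Longrightarrow> 1 \<le> k" using walk0 \<open>u \<noteq> v\<close> by (case_tac k) auto
  ultimately show ?thesis unfolding nc_dist_def by (intro Least_equality) auto
qed

lemma dist_2: assumes "u \<in> nc_vertices G" "v \<in> nc_vertices G" "u \<noteq> v" "Rv u v"
  shows "nc_dist G u v = 2"
proof -
  obtain w where w: "nc_adj G u w" "nc_adj G w v" using witness assms by blast
  have "nc_walk G 2 u v" unfolding nc_walk_def using w assms(1)
    by (intro exI[of _ "\<lambda>i. if i = 0 then u else if i = 1 then w else v"]) (auto simp: less_2_cases_iff)
  moreover have "\<And>k. nc_walk G k u v \<Longrightarrow> 2 \<le> k"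
  proof -
    fix k assume "nc_walk G k u v"
    moreover have "\<not> nc_walk G 0 u v" using walk0 assms(3) by simp
    moreover have "\<not> nc_walk G 1 u v" using walk1 adj_iff assms(4) by simp
    ultimately show "2 \<le> k" by (cases k; cases "k - 1") auto
  qed
  ultimately show ?thesis unfolding nc_dist_def by (intro Least_equality) auto
qed


lemma X_inj: "inj_on X {0..<2 * int n}"
proof (rule inj_onI)
  fix a b assume "a \<in> {0..<2 * int n}" "b \<in> {0..<2 * int n}" "X a = X b"
  thus "a = b" using X_eq_iff by simp
qed

lemma Y_inj: "inj_on Y {0..<2 * int n}"
proof (rule inj_onI)
  fix a b assume "a \<in> {0..<2 * int n}" "b \<in> {0..<2 * int n}" "Y a = Y b"
  thus "a = b" using Y_eq_iff by simp
qed

lemma dvd_mod_iff: "int n dvd a \<longleftrightarrow> a mod (2 * int n) = 0 \<or> a mod (2 * int n) = int n"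
proof -
  have n0: "int n > 0" using n2 by simp
  define r where "r = a mod (2 * int n)"
  define q where "q = a div (2 * int n)"
  have a0: "a = 2 * int n * q + r" unfolding r_def q_def by simp
  have a: "a = int n * (2 * q) + r" using a0 by (simp add: algebra_simps)
  have r: "0 \<le> r" "r < 2 * int n" unfolding r_def using n0 by auto
  have "int n dvd a \<longleftrightarrow> int n dvd r" using a by (simp add: dvd_add_right_iff)
  also have "\<dots> \<longleftrightarrow> r = 0 \<or> r = int n"
  proof
    assume "int n dvd r"
    then obtain k where k: "r = int n * k" by blast
    have "0 \<le> k" using r k n0 by (simp add: zero_le_mult_iff)
    moreover have "k < 2"
    proof -
      have "int n * k < int n * 2" using r k by (simp add: mult.commute)
      thus ?thesis using mult_less_cancel_left_pos[OF n0] by blast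
    qed
    ultimately have "k = 0 \<or> k = 1" by auto
    thus "r = 0 \<or> r = int n" using k by auto
  qed auto
  finally show ?thesis unfolding r_def .
qed

lemma Rot_img: "Rot = X ` ({0..<2 * int n} - {0, int n})"
proof
  show "Rot \<subseteq> X ` ({0..<2 * int n} - {0, int n})"
  proof
    fix u assume "u \<in> Rot"
    then obtain a where a: "u = X a" "\<not> int n dvd a" unfolding Rot_def by blast
    have n0: "int n > 0" using n2 by simp
    have "a mod (2 * int n) \<in> {0..<2 * int n} - {0, int n}" using a(2) dvd_mod_iff n0 by auto
    moreover have "u = X (a mod (2 * int n))" using a X_mod by simp
    ultimately show "u \<in> X ` ({0..<2 * int n} - {0, int n})" by blast
  qed
  show "X ` ({0..<2 * int n} - {0, int n}) \<subseteq> Rot"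
  proof
    fix u assume "u \<in> X ` ({0..<2 * int n} - {0, int n})"
    then obtain a where a: "u = X a" "a \<in> {0..<2 * int n} - {0, int n}" by blast
    hence "a mod (2 * int n) = a" by simp
    hence "\<not> int n dvd a" using dvd_mod_iff a(2) by simp
    thus "u \<in> Rot" unfolding Rot_def using a by blast
  qed
qed

lemma card_Rot: "card Rot = 2 * n - 2"
proof -
  have "card Rot = card ({0..<2 * int n} - {0, int n})"
    unfolding Rot_img by (rule card_image) (rule inj_on_subset[OF X_inj], auto)
  also have "\<dots> = card {0..<2 * int n} - card {0, int n}"
    by (rule card_Diff_subset) (use n2 in auto)
  also have "\<dots> = 2 * n - 2" using n2 by simp
  finally show ?thesis .
qed

lemma card_Ref: "card Ref = 2 * n"
proof -
  have "Ref = Y ` {0..<2 * int n}"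
  proof
    show "Ref \<subseteq> Y ` {0..<2 * int n}"
    proof
      fix u assume "u \<in> Ref"
      then obtain b where "u = Y b" unfolding Ref_def by blast
      hence "u = Y (b mod (2 * int n))" using Y_mod by simp
      moreover have "b mod (2 * int n) \<in> {0..<2 * int n}" using n2 by simp
      ultimately show "u \<in> Y ` {0..<2 * int n}" by blast
    qed
  qed (auto simp: Ref_def)
  hence "card Ref = card {0..<2 * int n}" using card_image[OF Y_inj] by simp
  thus ?thesis by simp
qed

lemma fin_Rot: "finite Rot" and fin_Ref: "finite Ref"
  using card_Rot card_Ref n2 by (auto intro: card_ge_0_finite)

lemma card_V: "card (nc_vertices G) = 4 * n - 2"
  unfolding V_Rot_Ref using card_Un_disjoint[OF fin_Rot fin_Ref Rot_Ref_disj] card_Rot card_Ref n2 by simp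

lemma cls_Rot: "u \<in> Rot \<Longrightarrow> {v \<in> nc_vertices G. Rv u v} = Rot"
  unfolding V_Rot_Ref Rot_def Ref_def by (auto simp: Rv_simps)

lemma cls_Ref: "{v \<in> nc_vertices G. Rv (Y b) v} = {Y b, Y (b + int n)}"
proof
  show "{v \<in> nc_vertices G. Rv (Y b) v} \<subseteq> {Y b, Y (b + int n)}"
  proof
    fix v assume v: "v \<in> {v \<in> nc_vertices G. Rv (Y b) v}"
    then consider a where "v = X a" "\<not> int n dvd a" | c where "v = Y c" unfolding V_char by blast
    thus "v \<in> {Y b, Y (b + int n)}"
    proof cases
      case 1 thus ?thesis using v by (simp add: Rv_simps)
    next
      case 2
      hence "int n dvd b - c" using v by (simp add: Rv_simps)
      then obtain k where k: "b - c = int n * k" by blast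
      show ?thesis
      proof (cases "even k")
        case True
        then obtain m where "k = 2 * m" by blast
        hence "c - b = 2 * int n * (- m)" using k by simp
        hence "2 * int n dvd c - b" by simp
        hence "Y c = Y b" by (simp add: Y_eq_iff mod2n_iff)
        thus ?thesis using 2 by simp
      next
        case False
        then obtain m where "k = 2 * m + 1" using oddE by blast
        hence "c - (b + int n) = 2 * int n * (- m - 1)" using k by (simp add: algebra_simps)
        hence "2 * int n dvd c - (b + int n)" by simp
        hence "Y c = Y (b + int n)" by (simp add: Y_eq_iff mod2n_iff)
        thus ?thesis using 2 by simp
      qed
    qed
  qed
  show "{Y b, Y (b + int n)} \<subseteq> {v \<in> nc_vertices G. Rv (Y b) v}"
    using V_char by (auto simp: Rv_simps)
qed

lemma card_cls_Ref: "card {v \<in> nc_vertices G. Rv (Y b) v} = 2"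
proof -
  have "Y b \<noteq> Y (b + int n)"
  proof
    assume "Y b = Y (b + int n)"
    hence "2 * int n dvd b - (b + int n)" using Y_eq_iff mod2n_iff by simp
    hence "2 * int n dvd int n" by (simp add: dvd_minus_iff)
    moreover have "int n \<noteq> 0" using n2 by simp
    ultimately have "\<bar>2 * int n\<bar> \<le> \<bar>int n\<bar>" using dvd_imp_le_int by blast
    thus False using n2 by simp
  qed
  thus ?thesis unfolding cls_Ref by simp
qed

end

lemma index_transfer:
  fixes V :: "'a set" and f :: "nat \<Rightarrow> 'a" and P :: "'a \<Rightarrow> bool"
  assumes bij: "bij_betw f {0..<N} V"
  shows "card {k. k < N \<and> P (f k)} = card {v \<in> V. P v}"
proof -
  have "f ` {k. k < N \<and> P (f k)} = {v \<in> V. P v}"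
  proof
    show "f ` {k. k < N \<and> P (f k)} \<subseteq> {v \<in> V. P v}" using bij bij_betwE by fastforce
    show "{v \<in> V. P v} \<subseteq> f ` {k. k < N \<and> P (f k)}"
    proof
      fix v assume v: "v \<in> {v \<in> V. P v}"
      then obtain k where "k \<in> {0..<N}" "f k = v" using bij unfolding bij_betw_def by auto
      thus "v \<in> f ` {k. k < N \<and> P (f k)}" using v by auto
    qed
  qed
  moreover have "inj_on f {k. k < N \<and> P (f k)}"
    using bij unfolding bij_betw_def by (rule inj_on_subset[OF conjunct1]) auto
  ultimately show ?thesis using card_image by fastforce
qed

theorem theorem3p2:
  fixes G :: "('a, 'b) monoid_scheme" and x y :: 'a and n :: nat and f :: "nat \<Rightarrow> 'a"
  assumes "group G"
    and "n \<ge> 2"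
    and "x \<in> carrier G" and "y \<in> carrier G"
    and "x [^]\<^bsub>G\<^esub> (2 * n) = \<one>\<^bsub>G\<^esub>"
    and "x [^]\<^bsub>G\<^esub> n = y [^]\<^bsub>G\<^esub> (2::nat)"
    and "y \<otimes>\<^bsub>G\<^esub> x = inv\<^bsub>G\<^esub> x \<otimes>\<^bsub>G\<^esub> y"
    and "carrier G = generate G {x, y}"
    and "finite (carrier G)" and "card (carrier G) = 4 * n"
    and "bij_betw f {0..<card (nc_vertices G)} (nc_vertices G)"
  shows "char_poly (nc_dist_laplacian G f) =
           [:0, 1:]
         * [:- (4 * real n - 2), 1:] ^ n
         * [:- (4 * real n), 1:] ^ n
         * [:- (6 * real n - 4), 1:] ^ (2 * n - 3)"
proof -
  have QQ: "quat G x y n" unfolding quat_def quat_axioms_def using assms by blast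
  interpret Q: quat G x y n by (rule QQ)
  let ?V = "nc_vertices G"
  let ?N = "card ?V"
  let ?R = "\<lambda>i j. Q.Rv (f i) (f j)"
  have bij: "bij_betw f {0..<?N} ?V" by fact
  have cV: "?N = 4 * n - 2" by (rule Q.card_V)
  have finV: "finite ?V" using assms(9) unfolding nc_vertices_def by simp
  have neV: "?V \<noteq> {}" using cV assms(2) by auto
  have fV: "\<And>i. i < ?N \<Longrightarrow> f i \<in> ?V" using bij bij_betwE by fastforce
  have d0: "\<And>u. u \<in> ?V \<Longrightarrow> nc_dist G u u = 0" by (rule Q.dist_0)
  have d2: "\<And>u v. u \<in> ?V \<Longrightarrow> v \<in> ?V \<Longrightarrow> u \<noteq> v \<Longrightarrow> Q.Rv u v \<Longrightarrow> nc_dist G u v = 2" by (rule Q.dist_2)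
  have d1: "\<And>u v. u \<in> ?V \<Longrightarrow> v \<in> ?V \<Longrightarrow> \<not> Q.Rv u v \<Longrightarrow> nc_dist G u v = 1" by (rule Q.dist_1)
  note BR = bridge[OF finV neV bij, of Q.Rv "nc_dist G", OF Q.Rv_refl Q.Rv_sym Q.Rv_trans d0 d2 d1]
  have L: "nc_dist_laplacian G f = eqv.Mm ?N ?R"
    using BR(2) unfolding nc_dist_laplacian_def nc_transmission_def by simp
  interpret E: eqv ?N ?R by (rule BR(1))
  have sz: "\<And>i. i < ?N \<Longrightarrow> E.sz i = card {v \<in> ?V. Q.Rv (f i) v}"
    unfolding E.sz_def E.cls_def using index_transfer[OF bij] by blast
  define S1 where "S1 = {i. i < ?N \<and> f i \<in> Q.Rot}"
  define S2 where "S2 = {i. i < ?N \<and> f i \<in> Q.Ref}"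
  have "card S1 = card {v \<in> ?V. v \<in> Q.Rot}" unfolding S1_def by (rule index_transfer[OF bij])
  also have "{v \<in> ?V. v \<in> Q.Rot} = Q.Rot" using Q.V_Rot_Ref by blast
  finally have cS1: "card S1 = (2 * n - 2) * 1" using Q.card_Rot by simp
  have "card S2 = card {v \<in> ?V. v \<in> Q.Ref}" unfolding S2_def by (rule index_transfer[OF bij])
  also have "{v \<in> ?V. v \<in> Q.Ref} = Q.Ref" using Q.V_Rot_Ref by blast
  finally have cS2: "card S2 = 2 * n" using Q.card_Ref by simp
  have U: "S1 \<union> S2 = {0..<?N}"
  proof
    show "S1 \<union> S2 \<subseteq> {0..<?N}" unfolding S1_def S2_def by auto
    show "{0..<?N} \<subseteq> S1 \<union> S2"
    proof
      fix i assume "i \<in> {0..<?N}"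
      hence i: "i < ?N" by simp
      have "f i \<in> Q.Rot \<union> Q.Ref" using fV[OF i] Q.V_Rot_Ref by blast
      thus "i \<in> S1 \<union> S2" using i unfolding S1_def S2_def by blast
    qed
  qed
  have D: "S1 \<inter> S2 = {}" using Q.Rot_Ref_disj unfolding S1_def S2_def by auto
  have a: "\<And>j. j \<in> S1 \<Longrightarrow> E.sz j = 2 * n - 2"
  proof -
    fix j assume "j \<in> S1"
    hence j: "j < ?N" "f j \<in> Q.Rot" unfolding S1_def by auto
    show "E.sz j = 2 * n - 2" using sz[OF j(1)] Q.cls_Rot[OF j(2)] Q.card_Rot by simp
  qed
  have b: "\<And>j. j \<in> S2 \<Longrightarrow> E.sz j = 2"
  proof -
    fix j assume "j \<in> S2"
    hence j: "j < ?N" "f j \<in> Q.Ref" unfolding S2_def by auto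
    then obtain c where "f j = Q.Y c" unfolding Q.Ref_def by blast
    thus "E.sz j = 2" using sz[OF j(1)] Q.card_cls_Ref by simp
  qed
  have c1: "E.closed S1" unfolding E.closed_def
  proof (intro conjI ballI allI impI)
    show "S1 \<subseteq> {0..<?N}" unfolding S1_def by auto
    fix i k assume i: "i \<in> S1" and k: "k < ?N" and R: "Q.Rv (f i) (f k)"
    have "f k \<in> {v \<in> ?V. Q.Rv (f i) v}" using fV[OF k] R by simp
    hence "f k \<in> Q.Rot" using Q.cls_Rot i unfolding S1_def by auto
    thus "k \<in> S1" using k unfolding S1_def by simp
  qed
  have c2: "E.closed S2" unfolding E.closed_def
  proof (intro conjI ballI allI impI)
    show "S2 \<subseteq> {0..<?N}" unfolding S2_def by auto
    fix i k assume i: "i \<in> S2" and k: "k < ?N" and R: "Q.Rv (f i) (f k)"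
    then obtain c where c: "f i = Q.Y c" unfolding S2_def Q.Ref_def by blast
    have "f k \<in> {v \<in> ?V. Q.Rv (f i) v}" using fV[OF k] R by simp
    hence "f k \<in> Q.Ref" using Q.cls_Ref[of c] c unfolding Q.Ref_def by auto
    thus "k \<in> S2" using k unfolding S2_def by simp
  qed
  have ne1: "S1 \<noteq> {}" using cS1 assms(2) by auto
  have ne2: "S2 \<noteq> {}" using cS2 assms(2) by auto
  have CP: "char_poly E.Mm = [:0, 1:] * [:- real ?N, 1:] ^ (1 + n - 1)
     * [:- (real ?N + real (2 * n - 2)), 1:] ^ ((2 * n - 2) * 1 - 1) * [:- (real ?N + real (2::nat)), 1:] ^ (2 * n - n)"
    by (rule E.char_poly_split[OF c1 c2 U D a b cS1 cS2 ne1 ne2])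
  have r1: "real ?N = 4 * real n - 2" using cV assms(2) by (simp add: of_nat_diff)
  have r2: "real ?N + real (2 * n - 2) = 6 * real n - 4" using r1 assms(2) by (simp add: of_nat_diff)
  have r3: "real ?N + real (2::nat) = 4 * real n" using r1 by simp
  have e1: "1 + n - 1 = n" "(2 * n - 2) * 1 - 1 = 2 * n - 3" "2 * n - n = n" by auto
  have r4: "real (2 * n - 2) = 2 * real n - 2" using assms(2) by (simp add: of_nat_diff)
  have r5: "- (4 * real n - 2 + (2 * real n - 2)) = - (6 * real n - 4)" by simp
  show ?thesis unfolding L CP r1 r4 e1 r5 by (simp add: mult_ac)
qed

end
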